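(* Let $(X,d,f)$ be a topological dynamical system ($(X,d)$ compact metric, $f:X\to X$ continuous), fix $\delta\in(0,1)$ and $\epsilon>0$, and let $\nu\in\mathscr M_{\rm inv}(X,f)$. Then for every integer $k\ge1$ there exist ergodic measures $m_{k,1},\dots,m_{k,s_k}\in\mathscr M_{\rm erg}(X,f)$ and positive rational numbers $a_{k,1},\dots,a_{k,s_k}$ with $\sum_j a_{k,j}=1$ such that $\nu_k=\sum_{j=1}^{s_k}a_{k,j}m_{k,j}$ satisfies \[ D(\nu,\nu_k)\le\frac1k\quad\text{and}\quad h^{Kat}_\nu(f,\epsilon)\le\sum_{j=1}^{s_k}a_{k,j}h^{Kat}_{m_{k,j}}(f,\epsilon). \]
   Context: $\mathscr M(X)$ is the set of Borel probability measures, $\mathscr M_{\rm inv}(X,f)$ the invariant and $\mathscr M_{\rm erg}(X,f)$ the ergodic ones. Fix a dense sequence $\{\varphi_i\}_{i\ge1}$ in $C(X)$ and let $D(\mu,\nu)=\sum_{i\ge1}\frac{|\int\varphi_id\mu-\int\varphi_id\nu|}{2^{i+1}\|\varphi_i\|}$. With $B_n(x,\epsilon)=\{y:\max_{0\le i<n}d(f^ix,f^iy)<\epsilon\}$, let $N^m(n,\epsilon,\delta)$ be the minimal number of Bowen balls $B_n(x,\epsilon)$ covering a set of $m$-measure larger than $1-\delta$. For ergodic $m$, $h^{Kat}_m(f,\epsilon)=\liminf_{n\to\infty}\frac1n\log N^m(n,\epsilon,\delta)$. For $\nu\in\mathscr M_{\rm inv}(X,f)$ with ergodic decomposition $\nu=\int_{\mathscr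 M_{\rm erg}(X,f)}m\,d\tau(m)$, $h^{Kat}_\nu(f,\epsilon)=\int h^{Kat}_m(f,\epsilon)\,d\tau(m)$. *)

theory Defs
  imports "HOL-Probability.Probability"
begin

text \<open>Ambient system: the compact metric space X is the whole type 'a
  (assumption compact UNIV), f :: 'a => 'a continuous.
  Borel probability measures = M with sets M = sets borel and prob_space M.\<close>

definition borel_prob :: "'a::metric_space measure \<Rightarrow> bool" where
  "borel_prob M \<longleftrightarrow> sets M = sets borel \<and> prob_space M"

definition invariant_meas :: "('a::metric_space \<Rightarrow> 'a) \<Rightarrow> 'a measure \<Rightarrow> bool" where
  "invariant_meas f M \<longleftrightarrow> borel_prob M \<and>
     (\<forall>A\<in>sets borel. emeasure M (f -` A) = emeasure M A)"

definition ergodic_meas :: "('a::metric_space \<Rightarrow> 'a) \<Rightarrow> 'a measure \<Rightarrow> bool" where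
  "ergodic_meas f M \<longleftrightarrow> invariant_meas f M \<and>
     (\<forall>A\<in>sets borel. f -` A = A \<longrightarrow> emeasure M A = 0 \<or> emeasure M A = 1)"

definition sup_norm :: "('a \<Rightarrow> real) \<Rightarrow> real" where
  "sup_norm g = (SUP x. \<bar>g x\<bar>)"

text \<open>The metric D built from a sequence phi; the paper's phi_i (i >= 1) is phi i here,
  the sum runs over i >= 1.\<close>
definition Dmet :: "(nat \<Rightarrow> 'a::metric_space \<Rightarrow> real) \<Rightarrow> 'a measure \<Rightarrow> 'a measure \<Rightarrow> real" where
  "Dmet phi \<mu> \<nu> = (\<Sum>i. \<bar>integral\<^sup>L \<mu> (phi (Suc i)) - integral\<^sup>L \<nu> (phi (Suc i))\<bar>
                          / (2 ^ (Suc i + 1) * sup_norm (phi (Suc i))))"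

definition bowen_ball :: "('a::metric_space \<Rightarrow> 'a) \<Rightarrow> nat \<Rightarrow> 'a \<Rightarrow> real \<Rightarrow> 'a set" where
  "bowen_ball f n x \<epsilon> = {y. \<forall>i<n. dist ((f ^^ i) x) ((f ^^ i) y) < \<epsilon>}"

definition N_cover :: "('a::metric_space \<Rightarrow> 'a) \<Rightarrow> 'a measure \<Rightarrow> nat \<Rightarrow> real \<Rightarrow> real \<Rightarrow> nat" where
  "N_cover f m n \<epsilon> \<delta> = (LEAST k. \<exists>C. finite C \<and> card C = k \<and>
        measure m (\<Union>x\<in>C. bowen_ball f n x \<epsilon>) > 1 - \<delta>)"

definition katok_erg :: "('a::metric_space \<Rightarrow> 'a) \<Rightarrow> real \<Rightarrow> real \<Rightarrow> 'a measure \<Rightarrow> ereal" where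
  "katok_erg f \<delta> \<epsilon> m = liminf (\<lambda>n. ereal (ln (real (N_cover f m n \<epsilon> \<delta>)) / real n))"

definition ergodic_decomposition ::
    "('a::metric_space \<Rightarrow> 'a) \<Rightarrow> 'a measure \<Rightarrow> 'a measure measure \<Rightarrow> bool" where
  "ergodic_decomposition f \<nu> \<tau> \<longleftrightarrow> prob_space \<tau> \<and> sets \<tau> = sets (prob_algebra borel) \<and>
     (AE m in \<tau>. ergodic_meas f m) \<and>
     (\<forall>A\<in>sets borel. emeasure \<nu> A = (\<integral>\<^sup>+ m. emeasure m A \<partial>\<tau>))"

definition katok_inv ::
    "('a::metric_space \<Rightarrow> 'a) \<Rightarrow> real \<Rightarrow> real \<Rightarrow> 'a measure measure \<Rightarrow> ennreal" where
  "katok_inv f \<delta> \<epsilon> \<tau> = (\<integral>\<^sup>+ m. e2ennreal (katok_erg f \<delta> \<epsilon> m) \<partial>\<tau>)"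

end

theory Submission
  imports Defs
begin


lemma N_cover_bound:
  fixes f :: "'a::metric_space \<Rightarrow> 'a"
  assumes cpt: "compact (UNIV :: 'a set)" and eps: "\<epsilon> > 0" and del: "\<delta> > 0"
  shows "\<exists>r::nat. \<forall>m n. prob_space m \<and> sets m = sets borel \<longrightarrow> N_cover f m n \<epsilon> \<delta> \<le> r ^ n"
proof -
  obtain Cc where Cc: "finite Cc" "(UNIV::'a set) \<subseteq> (\<Union>x\<in>Cc. ball x (\<epsilon>/2))"
    using compactE_image[OF cpt, of UNIV "\<lambda>x. ball x (\<epsilon>/2)"] eps by (metis centre_in_ball half_gt_zero open_ball UN_I UNIV_I subsetI)
  show ?thesis
  proof (intro exI allI impI)
    fix m :: "'a measure" and n :: nat
    assume m: "prob_space m \<and> sets m = sets borel"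
    define W where "W = PiE {..<n} (\<lambda>_. Cc)"
    define S where "S w = {x. \<forall>i<n. dist (w i) ((f ^^ i) x) < \<epsilon>/2}" for w
    define pick where "pick w = (SOME x. x \<in> S w)" for w
    define C where "C = pick ` {w \<in> W. S w \<noteq> {}}"
    have finW: "finite W" unfolding W_def using Cc(1) by (intro finite_PiE) auto
    have cardW: "card W = card Cc ^ n" unfolding W_def by (simp add: card_PiE)
    have finC: "finite C" unfolding C_def using finW by auto
    have cardC: "card C \<le> card Cc ^ n"
    proof -
      have "card C \<le> card {w \<in> W. S w \<noteq> {}}" unfolding C_def by (rule card_image_le) (use finW in auto)
      also have "\<dots> \<le> card W" using finW by (intro card_mono) auto
      finally show ?thesis using cardW by simp
    qed
    have cover: "(\<Union>x\<in>C. bowen_ball f n x \<epsilon>) = UNIV"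
    proof (intro set_eqI iffI)
      fix y :: 'a
      define w where "w i = (if i < n then (SOME c. c \<in> Cc \<and> dist c ((f ^^ i) y) < \<epsilon>/2) else undefined)" for i
      have wi: "w i \<in> Cc \<and> dist (w i) ((f ^^ i) y) < \<epsilon>/2" if "i < n" for i
      proof -
        have "\<exists>c. c \<in> Cc \<and> dist c ((f ^^ i) y) < \<epsilon>/2" proof -
          have "(f ^^ i) y \<in> (\<Union>x\<in>Cc. ball x (\<epsilon>/2))" using Cc(2) by blast
          then show ?thesis by (auto simp: mem_ball)
        qed
        then have "(SOME c. c \<in> Cc \<and> dist c ((f ^^ i) y) < \<epsilon>/2) \<in> Cc \<and>
           dist (SOME c. c \<in> Cc \<and> dist c ((f ^^ i) y) < \<epsilon>/2) ((f ^^ i) y) < \<epsilon>/2"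
          by (rule someI_ex)
        then show ?thesis unfolding w_def using that by (simp only: if_True)
      qed
      have w1: "\<forall>i\<in>{..<n}. w i \<in> Cc" using wi by auto
      have w2: "w \<in> extensional {..<n}" by (auto simp: extensional_def w_def)
      have wW: "w \<in> W" unfolding W_def using w1 w2 by (simp add: PiE_iff)
      have yS: "y \<in> S w" unfolding S_def using wi by auto
      then have pS: "pick w \<in> S w" unfolding pick_def by (metis someI_ex)
      have "y \<in> bowen_ball f n (pick w) \<epsilon>"
        unfolding bowen_ball_def
      proof (intro CollectI allI impI)
        fix i assume i: "i < n"
        have "dist ((f ^^ i) (pick w)) ((f ^^ i) y) \<le> dist ((f ^^ i) (pick w)) (w i) + dist (w i) ((f ^^ i) y)"
          by (rule dist_triangle)
        also have "\<dots> < \<epsilon>/2 + \<epsilon>/2" proof -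
          have "dist (w i) ((f ^^ i) (pick w)) < \<epsilon>/2" "dist (w i) ((f ^^ i) y) < \<epsilon>/2"
            using pS yS i unfolding S_def by auto
          then show ?thesis by (simp add: dist_commute)
        qed
        finally show "dist ((f ^^ i) (pick w)) ((f ^^ i) y) < \<epsilon>" by simp
      qed
      moreover have "pick w \<in> C" unfolding C_def using wW yS by auto
      ultimately show "y \<in> (\<Union>x\<in>C. bowen_ball f n x \<epsilon>)" by auto
    qed auto
    have sp: "space m = UNIV" using m sets_eq_imp_space_eq[of m borel] by simp
    have "measure m (\<Union>x\<in>C. bowen_ball f n x \<epsilon>) = 1"
      using m sp cover prob_space.prob_space[of m] by simp
    then have "\<exists>C'. finite C' \<and> card C' = card C \<and> measure m (\<Union>x\<in>C'. bowen_ball f n x \<epsilon>) > 1 - \<delta>"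
      using finC del by auto
    then have "N_cover f m n \<epsilon> \<delta> \<le> card C"
      unfolding N_cover_def by (rule Least_le)
    then show "N_cover f m n \<epsilon> \<delta> \<le> card Cc ^ n" using cardC by simp
  qed
qed

lemma katok_bound:
  fixes f :: "'a::metric_space \<Rightarrow> 'a"
  assumes cpt: "compact (UNIV :: 'a set)" and eps: "\<epsilon> > 0" and del: "\<delta> > 0"
  shows "\<exists>L::real. L \<ge> 0 \<and> (\<forall>m. prob_space m \<and> sets m = sets borel \<longrightarrow> e2ennreal (katok_erg f \<delta> \<epsilon> m) \<le> ennreal L)"
proof -
  obtain r :: nat where r: "\<And>m n. prob_space m \<and> sets m = sets borel \<Longrightarrow> N_cover f m n \<epsilon> \<delta> \<le> r ^ n"
    using N_cover_bound[OF assms, of f] by blast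
  define L where "L = ln (real (max r 1))"
  have L0: "L \<ge> 0" unfolding L_def by simp
  show ?thesis
  proof (intro exI conjI allI impI)
    fix m :: "'a measure" assume m: "prob_space m \<and> sets m = sets borel"
    have ev: "\<forall>\<^sub>F n in sequentially. ereal (ln (real (N_cover f m n \<epsilon> \<delta>)) / real n) \<le> ereal L"
    proof (rule eventually_sequentiallyI[of 1])
      fix n :: nat assume n: "n \<ge> 1"
      have le: "real (N_cover f m n \<epsilon> \<delta>) \<le> real (max r 1) ^ n"
        proof -
        have "r ^ n \<le> (max r 1) ^ n" by (rule power_mono) auto
        then have "N_cover f m n \<epsilon> \<delta> \<le> (max r 1) ^ n" using r[OF m, of n] by linarith
        then have "real (N_cover f m n \<epsilon> \<delta>) \<le> real ((max r 1) ^ n)" by (simp only: of_nat_le_iff)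
        then show ?thesis by simp
      qed
      have "ln (real (N_cover f m n \<epsilon> \<delta>)) \<le> real n * L"
      proof (cases "N_cover f m n \<epsilon> \<delta> = 0")
        case True then show ?thesis using L0 by simp
      next
        case False
        then have "ln (real (N_cover f m n \<epsilon> \<delta>)) \<le> ln (real (max r 1) ^ n)"
          using le by (subst ln_le_cancel_iff) auto
        also have "\<dots> = real n * L" unfolding L_def by (simp add: ln_realpow)
        finally show ?thesis .
      qed
      then show "ereal (ln (real (N_cover f m n \<epsilon> \<delta>)) / real n) \<le> ereal L"
        using n by (simp add: divide_le_eq mult.commute)
    qed
    have "katok_erg f \<delta> \<epsilon> m \<le> ereal L"
      unfolding katok_erg_def
      by (rule order_trans[OF Liminf_le_Limsup Limsup_bounded[OF ev]]) simp
    then have "e2ennreal (katok_erg f \<delta> \<epsilon> m) \<le> e2ennreal (ereal L)" by (rule e2ennreal_mono)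
    then show "e2ennreal (katok_erg f \<delta> \<epsilon> m) \<le> ennreal L" by (simp add: e2ennreal_ereal)
  qed (rule L0)
qed




lemma measurable_minorant:
  fixes h :: "'b \<Rightarrow> ennreal"
  shows "\<exists>u. u \<in> borel_measurable M \<and> (\<forall>x. u x \<le> h x) \<and> integral\<^sup>N M h \<le> integral\<^sup>N M u"
proof -
  define G where "G = {g. simple_function M g \<and> g \<le> h}"
  have G0: "(\<lambda>_. 0) \<in> G" unfolding G_def by (auto simp: le_fun_def)
  obtain F where F: "incseq F" "range F \<subseteq> integral\<^sup>S M ` G" "Sup (integral\<^sup>S M ` G) = Sup (range F)"
    using ennreal_Sup_countable_SUP[of "integral\<^sup>S M ` G"] G0 by blast
  have "\<forall>n. \<exists>g\<in>G. F n = integral\<^sup>S M g" using F(2) by blast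
  then obtain g where g: "\<And>n. g n \<in> G" "\<And>n. F n = integral\<^sup>S M (g n)" by metis
  define u where "u x = (SUP n. g n x)" for x
  have gs: "simple_function M (g n)" and gh: "\<And>x. g n x \<le> h x" for n
    using g(1)[of n] unfolding G_def by (auto simp: le_fun_def)
  have um: "u \<in> borel_measurable M"
    unfolding u_def using gs by (intro borel_measurable_SUP) (auto intro: borel_measurable_simple_function)
  have uh: "\<forall>x. u x \<le> h x" unfolding u_def using gh by (auto intro: SUP_least)
  have "integral\<^sup>N M h = Sup (range F)" unfolding nn_integral_def G_def[symmetric] using F(3) by simp
  also have "\<dots> \<le> integral\<^sup>N M u"
  proof (rule SUP_least)
    fix n
    have "F n = integral\<^sup>N M (g n)" using g(2)[of n] gs[of n] by (simp add: nn_integral_eq_simple_integral)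
    also have "\<dots> \<le> integral\<^sup>N M u" unfolding u_def by (intro nn_integral_mono) (auto intro: SUP_upper)
    finally show "F n \<le> integral\<^sup>N M u" .
  qed
  finally show ?thesis using um uh by blast
qed

lemma rat_approx:
  fixes b hv :: "'v \<Rightarrow> real"
  assumes fin: "finite S" and ne: "S \<noteq> {}" and bpos: "\<forall>v\<in>S. b v > 0" and bsum: "sum b S = 1" and eta: "\<eta> > 0"
  shows "\<exists>a. (\<forall>v\<in>S. a v \<in> \<rat> \<and> a v > 0) \<and> sum a S = 1 \<and> (\<Sum>v\<in>S. \<bar>a v - b v\<bar>) \<le> \<eta> \<and>
             (\<Sum>v\<in>S. b v * hv v) \<le> (\<Sum>v\<in>S. a v * hv v)"
proof -
  define vs where "vs = (SOME v. v \<in> S \<and> hv v = Max (hv ` S))"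
  have "Max (hv ` S) \<in> hv ` S" using fin ne by (intro Max_in) auto
  then have vs: "vs \<in> S" "hv vs = Max (hv ` S)" unfolding vs_def by (smt (verit) imageE someI_ex)+
  have hmax: "hv v \<le> hv vs" if "v \<in> S" for v using vs fin that by simp
  define T where "T = S - {vs}"
  have finT: "finite T" using fin by (simp add: T_def)
  have cardT: "card T \<le> card S" using fin by (simp add: T_def card_Diff1_le)
  have cS: "card S > 0" using fin ne by (simp add: card_gt_0_iff)
  define e where "e = \<eta> / (2 * card S)"
  have e: "e > 0" unfolding e_def using eta cS by simp
  have "\<forall>v\<in>T. \<exists>q\<in>\<rat>. b v - min (b v) e < q \<and> q < b v"
    using bpos e by (intro ballI Rats_dense_in_real) (auto simp: T_def)
  then obtain q where q: "\<And>v. v \<in> T \<Longrightarrow> q v \<in> \<rat> \<and> b v - min (b v) e < q v \<and> q v < b v" by metis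
  have qpos: "q v > 0" and qe: "b v - q v < e" and qb: "q v < b v" if "v \<in> T" for v
    using q[OF that] by (auto simp: min_def split: if_splits)
  define a where "a v = (if v = vs then 1 - sum q T else q v)" for v
  have sumS: "sum g S = g vs + sum g T" for g :: "'v \<Rightarrow> real"
    unfolding T_def using fin vs(1) by (simp add: sum.remove)
  have aT: "sum (\<lambda>v. a v * hv v) T = sum (\<lambda>v. q v * hv v) T" "sum a T = sum q T"
    "(\<Sum>v\<in>T. \<bar>a v - b v\<bar>) = (\<Sum>v\<in>T. b v - q v)"
    using qb by (auto simp: a_def T_def intro!: sum.cong) (smt (verit, best) Diff_iff insertI1 qb)
  have bvs: "b vs = 1 - sum b T" using bsum sumS[of b] by simp
  have dif: "a vs - b vs = (\<Sum>v\<in>T. b v - q v)" using bvs by (simp add: a_def sum_subtractf)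
  have difnn: "(\<Sum>v\<in>T. b v - q v) \<ge> 0" using qb by (intro sum_nonneg) (auto simp: less_imp_le)
  have difle: "(\<Sum>v\<in>T. b v - q v) \<le> card T * e"
    using sum_mono[of T "\<lambda>v. b v - q v" "\<lambda>_. e"] qe by (auto simp: less_imp_le)
  show ?thesis
  proof (intro exI conjI ballI)
    fix v assume v: "v \<in> S"
    show "a v \<in> \<rat>"
    proof (cases "v = vs")
      case True then show ?thesis unfolding a_def using q by (auto intro!: Rats_diff Rats_sum)
    next
      case False then show ?thesis using q v by (auto simp: a_def T_def)
    qed
    show "a v > 0"
    proof (cases "v = vs")
      case True then show ?thesis using dif difnn bpos vs(1) by force
    next
      case False then show ?thesis using qpos v by (auto simp: a_def T_def)
    qed
  next
    show "sum a S = 1" using sumS[of a] aT(2) by (simp add: a_def)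
  next
    have "(\<Sum>v\<in>S. \<bar>a v - b v\<bar>) = 2 * (\<Sum>v\<in>T. b v - q v)"
      using sumS[of "\<lambda>v. \<bar>a v - b v\<bar>"] aT(3) dif difnn by simp
    also have "\<dots> \<le> 2 * (card S * e)"
      using difle cardT e by (smt (verit, best) mult_right_mono of_nat_le_iff)
    also have "\<dots> = \<eta>" unfolding e_def using cS by simp
    finally show "(\<Sum>v\<in>S. \<bar>a v - b v\<bar>) \<le> \<eta>" .
  next
    have s1: "(\<Sum>v\<in>S. a v * hv v) = a vs * hv vs + (\<Sum>v\<in>T. q v * hv v)"
      using sumS[of "\<lambda>v. a v * hv v"] aT(1) by simp
    have s2: "(\<Sum>v\<in>S. b v * hv v) = b vs * hv vs + (\<Sum>v\<in>T. b v * hv v)"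
      using sumS[of "\<lambda>v. b v * hv v"] by simp
    have "(\<Sum>v\<in>T. (b v - q v) * (hv vs - hv v)) = (\<Sum>v\<in>T. hv vs * (b v - q v) - (b v * hv v - q v * hv v))"
      by (rule sum.cong) (auto simp: algebra_simps)
    also have "\<dots> = hv vs * (\<Sum>v\<in>T. b v - q v) - ((\<Sum>v\<in>T. b v * hv v) - (\<Sum>v\<in>T. q v * hv v))"
      by (simp add: sum_subtractf sum_distrib_left[symmetric])
    finally have s3: "(\<Sum>v\<in>T. (b v - q v) * (hv vs - hv v)) = hv vs * (a vs - b vs) - ((\<Sum>v\<in>T. b v * hv v) - (\<Sum>v\<in>T. q v * hv v))"
      using dif by simp
    have "(\<Sum>v\<in>T. (b v - q v) * (hv vs - hv v)) \<ge> 0"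
      using qb hmax by (intro sum_nonneg mult_nonneg_nonneg) (auto simp: T_def less_imp_le)
    then have "0 \<le> (\<Sum>v\<in>S. a v * hv v) - (\<Sum>v\<in>S. b v * hv v)"
      using s1 s2 s3 by (simp add: algebra_simps)
    then show "(\<Sum>v\<in>S. b v * hv v) \<le> (\<Sum>v\<in>S. a v * hv v)" by simp
  qed
qed

lemma Dsum_bound:
  fixes c D :: "nat \<Rightarrow> real" and k N :: nat
  assumes c: "\<And>i. c i \<ge> 0" and all: "\<And>i. \<bar>D i\<bar> \<le> 2 * c i"
    and near: "\<And>i. i < N \<Longrightarrow> \<bar>D i\<bar> \<le> c i / k" and k: "k \<ge> 1" and N: "2 * k \<le> 2 ^ N"
  shows "(\<Sum>i. \<bar>D i\<bar> / (2 ^ (Suc i + 1) * c i)) \<le> 1 / k"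
proof -
  define t where "t i = \<bar>D i\<bar> / (2 ^ (Suc i + 1) * c i)" for i
  have t0: "t i \<ge> 0" for i unfolding t_def using c[of i] by simp
  have t1: "t i \<le> (1/2) ^ Suc i" for i
  proof (cases "c i = 0")
    case True then show ?thesis by (simp add: t_def)
  next
    case False
    then have cp: "c i > 0" using c[of i] by simp
    have "t i \<le> (2 * c i) / (2 ^ (Suc i + 1) * c i)" unfolding t_def
      using all[of i] cp by (intro divide_right_mono) auto
    also have "\<dots> = (1/2) ^ Suc i" using cp by (simp add: power_divide)
    finally show ?thesis .
  qed
  have t2: "t i \<le> (1 / (2 * k)) * (1/2) ^ Suc i" if "i < N" for i
  proof (cases "c i = 0")
    case True then show ?thesis by (simp add: t_def)
  next
    case False
    then have cp: "c i > 0" using c[of i] by simp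
    have "t i \<le> (c i / k) / (2 ^ (Suc i + 1) * c i)" unfolding t_def
      using near[OF that] cp by (intro divide_right_mono) auto
    also have "\<dots> = (1 / (2 * k)) * (1/2) ^ Suc i" using cp by (simp add: power_divide)
    finally show ?thesis .
  qed
  have geo: "(\<lambda>i. (1/2::real) ^ Suc i) sums 1" using power_half_series .
  have summ: "summable t"
    by (rule summable_comparison_test[of _ "\<lambda>i. (1/2::real) ^ Suc i"]) (use t0 t1 geo in \<open>auto simp: sums_iff\<close>)
  have split: "suminf t = (\<Sum>i. t (i + N)) + sum t {..<N}" using suminf_split_initial_segment[OF summ, of N] .
  have p1: "sum t {..<N} \<le> 1 / (2 * k)"
  proof -
    have "sum t {..<N} \<le> (\<Sum>i<N. (1 / (2 * k)) * (1/2) ^ Suc i)" using t2 by (intro sum_mono) auto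
    also have "\<dots> = (1 / (2 * k)) * (\<Sum>i<N. (1/2::real) ^ Suc i)" by (simp add: sum_distrib_left)
    also have "\<dots> \<le> (1 / (2 * k)) * 1"
      using sum_le_suminf[of "\<lambda>i. (1/2::real) ^ Suc i" "{..<N}"] geo
      by (intro mult_left_mono) (auto simp: sums_iff)
    finally show ?thesis by simp
  qed
  have p2: "(\<Sum>i. t (i + N)) \<le> 1 / (2 * k)"
  proof -
    have "(\<Sum>i. t (i + N)) \<le> (\<Sum>i. (1/2) ^ N * (1/2::real) ^ Suc i)"
    proof (rule suminf_le)
      show "t (i + N) \<le> (1/2) ^ N * (1/2) ^ Suc i" for i using t1[of "i + N"] by (simp add: power_add mult.commute)
      show "summable (\<lambda>i. t (i + N))" using summ by (simp add: summable_iff_shift)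
      show "summable (\<lambda>i. (1/2::real) ^ N * (1/2) ^ Suc i)" using geo by (intro summable_mult) (auto simp: sums_iff)
    qed
    also have "(\<Sum>i. (1/2::real) ^ N * (1/2) ^ Suc i) = (1/2) ^ N"
    proof -
      have gs: "summable (\<lambda>i. (1/2::real)^Suc i)" "suminf (\<lambda>i. (1/2::real)^Suc i) = 1" using geo by (auto simp: sums_iff)
      show ?thesis by (simp only: suminf_mult[OF gs(1)] gs(2) mult_1_right)
    qed
    also have "(1/2::real) ^ N \<le> 1 / (2 * k)"
    proof -
      have "real (2 * k) \<le> 2 ^ N" using N by (metis of_nat_le_iff of_nat_numeral of_nat_power)
      then show ?thesis using k by (simp add: power_divide field_simps)
    qed
    finally show ?thesis .
  qed
  have "suminf t \<le> 1 / k" using split p1 p2 by (simp add: field_simps)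
  then show ?thesis unfolding t_def by simp
qed




lemma decomp_integral:
  fixes g :: "'a::metric_space \<Rightarrow> real"
  assumes dec: "ergodic_decomposition f \<nu> \<tau>" and nu: "invariant_meas f \<nu>"
    and gm: "g \<in> borel_measurable borel" and gb: "\<And>x. \<bar>g x\<bar> \<le> B"
  shows "(\<lambda>m. integral\<^sup>L m g) \<in> borel_measurable \<tau>"
    and "integral\<^sup>L \<nu> g = (\<integral>m. integral\<^sup>L m g \<partial>\<tau>)"
proof -
  have tau: "prob_space \<tau>" "sets \<tau> = sets (prob_algebra borel)"
    and em: "\<And>A. A \<in> sets borel \<Longrightarrow> emeasure \<nu> A = (\<integral>\<^sup>+ m. emeasure m A \<partial>\<tau>)"
    using dec unfolding ergodic_decomposition_def by auto
  have nus: "sets \<nu> = sets borel" using nu unfolding invariant_meas_def borel_prob_def by auto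
  have idm: "(\<lambda>m. m) \<in> \<tau> \<rightarrow>\<^sub>M subprob_algebra borel"
    by (rule measurable_prob_algebraD, rule measurable_ident_sets) (rule tau(2))
  define \<tau>' where "\<tau>' = distr \<tau> (subprob_algebra borel) (\<lambda>m. m)"
  have st: "sets \<tau>' = sets (subprob_algebra borel)" unfolding \<tau>'_def by simp
  have intm: "(\<lambda>M. integral\<^sup>L M g) \<in> subprob_algebra borel \<rightarrow>\<^sub>M borel"
    using gm by (rule integral_measurable_subprob_algebra)
  show "(\<lambda>m. integral\<^sup>L m g) \<in> borel_measurable \<tau>"
    using measurable_comp[OF idm intm] by (simp add: comp_def)
  have eq: "\<nu> = join \<tau>'"
  proof (rule measure_eqI)
    show "sets \<nu> = sets (join \<tau>')" using nus st by simp
    fix A assume "A \<in> sets \<nu>"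
    then have A: "A \<in> sets borel" using nus by simp
    have "emeasure (join \<tau>') A = (\<integral>\<^sup>+ M'. emeasure M' A \<partial>\<tau>')" by (rule emeasure_join[OF st A])
    also have "\<dots> = (\<integral>\<^sup>+ m. emeasure m A \<partial>\<tau>)" unfolding \<tau>'_def
      by (rule nn_integral_distr[OF idm]) (use A measurable_emeasure_subprob_algebra in simp)
    finally show "emeasure \<nu> A = emeasure (join \<tau>') A" using em[OF A] by simp
  qed
  have fin: "finite_measure \<tau>'" unfolding \<tau>'_def
    using prob_space.prob_space_distr[OF tau(1) idm] prob_space.finite_measure by blast
  have bnd: "AE M' in \<tau>'. emeasure M' (space M') \<le> ennreal 1"
    by (rule AE_I2) (use st sets_eq_imp_space_eq[OF st] in \<open>auto simp: space_subprob_algebra dest: subprob_space.emeasure_space_le_1\<close>)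
  have "integral\<^sup>L \<nu> g = (\<integral>M'. integral\<^sup>L M' g \<partial>\<tau>')"
    unfolding eq by (rule integral_join[OF gm _ st fin bnd]) (rule gb)
  also have "\<dots> = (\<integral>m. integral\<^sup>L m g \<partial>\<tau>)" unfolding \<tau>'_def
    by (rule integral_distr[OF idm intm])
  finally show "integral\<^sup>L \<nu> g = (\<integral>m. integral\<^sup>L m g \<partial>\<tau>)" .
qed

lemma mix_measure:
  fixes m :: "nat \<Rightarrow> 'a::metric_space measure" and a :: "nat \<Rightarrow> real"
  assumes mp: "\<And>j. m j \<in> space (prob_algebra borel)" and a0: "\<And>j. j < s \<Longrightarrow> a j \<ge> 0"
    and as: "(\<Sum>j<s. a j) = 1"
  shows "\<exists>\<nu>k. borel_prob \<nu>k \<and> (\<forall>A\<in>sets borel. emeasure \<nu>k A = (\<Sum>j<s. ennreal (a j) * emeasure (m j) A))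
     \<and> (\<forall>g B. g \<in> borel_measurable borel \<longrightarrow> (\<forall>x. \<bar>g x\<bar> \<le> B) \<longrightarrow> integral\<^sup>L \<nu>k g = (\<Sum>j<s. a j * integral\<^sup>L (m j) g))"
proof -
  define w where "w j = (if j < s then a j else 0)" for j
  have w0: "\<And>j. 0 \<le> w j" using a0 by (simp add: w_def)
  have w1: "(\<integral>\<^sup>+ j. ennreal (w j) \<partial>count_space UNIV) = 1"
  proof -
    have "(\<integral>\<^sup>+ j. ennreal (w j) \<partial>count_space UNIV) = (\<Sum>j. ennreal (w j))"
      by (rule nn_integral_count_space_nat)
    also have "\<dots> = (\<Sum>j<s. ennreal (w j))" by (rule suminf_finite) (auto simp: w_def)
    also have "\<dots> = ennreal (\<Sum>j<s. w j)" using w0 by simp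
    also have "(\<Sum>j<s. w j) = 1" using as by (simp add: w_def)
    finally show ?thesis by simp
  qed
  define p where "p = embed_pmf w"
  have pmfp: "pmf p j = w j" for j unfolding p_def by (rule pmf_embed_pmf[OF w0 w1])
  have setp: "set_pmf p \<subseteq> {..<s}"
  proof
    fix j assume "j \<in> set_pmf p"
    then have "w j \<noteq> 0" unfolding p_def set_embed_pmf[OF w0 w1] by simp
    then show "j \<in> {..<s}" unfolding w_def by (cases "j < s") auto
  qed
  have mps: "m j \<in> space (subprob_algebra borel)" for j
  proof -
    have "sets (m j) = sets borel" "prob_space (m j)" using mp[of j] unfolding space_prob_algebra by auto
    then show ?thesis unfolding space_subprob_algebra by (simp add: prob_space_imp_subprob_space)
  qed
  have mm: "m \<in> measure_pmf p \<rightarrow>\<^sub>M subprob_algebra borel"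
    unfolding measurable_pmf_measure1 using mps by blast
  define \<nu>k where "\<nu>k = measure_pmf p \<bind> m"
  have ne: "space (measure_pmf p) \<noteq> {}" by simp
  have sets_nuk: "sets \<nu>k = sets borel" unfolding \<nu>k_def
    by (rule sets_bind) (use mp in \<open>auto simp: space_prob_algebra\<close>)
  have prob: "prob_space \<nu>k" unfolding \<nu>k_def
    by (rule prob_space.prob_space_bind[OF measure_pmf.prob_space_axioms _ mm]) (use mp in \<open>auto simp: space_prob_algebra\<close>)
  have emk: "emeasure \<nu>k A = (\<Sum>j<s. ennreal (a j) * emeasure (m j) A)" if A: "A \<in> sets borel" for A
  proof -
    have "emeasure \<nu>k A = (\<integral>\<^sup>+ j. emeasure (m j) A \<partial>measure_pmf p)"
      unfolding \<nu>k_def by (rule emeasure_bind[OF ne mm A])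
    also have "\<dots> = (\<Sum>j\<in>{..<s}. emeasure (m j) A * pmf p j)"
      by (rule nn_integral_measure_pmf_support) (use setp in auto)
    also have "\<dots> = (\<Sum>j<s. ennreal (a j) * emeasure (m j) A)"
      by (rule sum.cong) (auto simp: pmfp w_def mult.commute)
    finally show ?thesis .
  qed
  have intk: "integral\<^sup>L \<nu>k g = (\<Sum>j<s. a j * integral\<^sup>L (m j) g)"
    if gm: "g \<in> borel_measurable borel" and gb: "\<forall>x. \<bar>g x\<bar> \<le> B" for g :: "'a \<Rightarrow> real" and B
  proof -
    define M where "M = distr (measure_pmf p) (subprob_algebra borel) m"
    have st: "sets M = sets (subprob_algebra borel)" unfolding M_def by simp
    have eq: "\<nu>k = join M" unfolding \<nu>k_def M_def by (rule bind_nonempty''[OF mm ne])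
    have fin: "finite_measure M" unfolding M_def
      using prob_space.prob_space_distr[OF measure_pmf.prob_space_axioms mm] prob_space.finite_measure by blast
    have bnd: "AE M' in M. emeasure M' (space M') \<le> ennreal 1"
      by (rule AE_I2) (use st sets_eq_imp_space_eq[OF st] in \<open>auto simp: space_subprob_algebra dest: subprob_space.emeasure_space_le_1\<close>)
    have intm: "(\<lambda>M. integral\<^sup>L M g) \<in> subprob_algebra borel \<rightarrow>\<^sub>M borel"
      using gm by (rule integral_measurable_subprob_algebra)
    have "integral\<^sup>L \<nu>k g = (\<integral>M'. integral\<^sup>L M' g \<partial>M)"
      unfolding eq by (rule integral_join[OF gm _ st fin bnd]) (use gb in auto)
    also have "\<dots> = (\<integral>j. integral\<^sup>L (m j) g \<partial>measure_pmf p)" unfolding M_def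
      by (rule integral_distr[OF mm intm])
    also have "\<dots> = (\<Sum>j\<in>{..<s}. pmf p j *\<^sub>R integral\<^sup>L (m j) g)"
      by (rule integral_measure_pmf) (use setp in auto)
    also have "\<dots> = (\<Sum>j<s. a j * integral\<^sup>L (m j) g)"
      by (rule sum.cong) (auto simp: pmfp w_def)
    finally show ?thesis .
  qed
  show ?thesis
    using sets_nuk prob emk intk unfolding borel_prob_def by blast
qed




lemma cont_facts:
  fixes g :: "'a::metric_space \<Rightarrow> real"
  assumes cpt: "compact (UNIV::'a set)" and gc: "continuous_on UNIV g"
  shows "g \<in> borel_measurable borel" "\<And>x. \<bar>g x\<bar> \<le> sup_norm g" "sup_norm g \<ge> 0"
proof -
  show "g \<in> borel_measurable borel" using gc by (rule borel_measurable_continuous_onI)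
  have "compact (g ` UNIV)" by (rule compact_continuous_image[OF gc cpt])
  then have "bounded (g ` UNIV)" by (rule compact_imp_bounded)
  then obtain a where a: "\<And>x. \<bar>g x\<bar> \<le> a" unfolding bounded_real by auto
  have bdd: "bdd_above (range (\<lambda>x. \<bar>g x\<bar>))" using a by (intro bdd_aboveI[where M=a]) auto
  show le: "\<bar>g x\<bar> \<le> sup_norm g" for x unfolding sup_norm_def by (rule cSUP_upper[OF _ bdd]) simp
  show "sup_norm g \<ge> 0" using le[of undefined] by simp
qed

lemma bounded_int:
  fixes g :: "'a::metric_space \<Rightarrow> real"
  assumes mu: "prob_space \<mu>" "sets \<mu> = sets borel" and gm: "g \<in> borel_measurable borel"
    and gb: "\<And>x. \<bar>g x\<bar> \<le> c"
  shows "\<bar>integral\<^sup>L \<mu> g\<bar> \<le> c"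
proof -
  interpret prob_space \<mu> by (rule mu(1))
  have gm': "g \<in> borel_measurable \<mu>" using gm mu(2) by (simp cong: measurable_cong_sets)
  have int: "integrable \<mu> g" by (rule integrable_const_bound[where B=c]) (use gb gm' in auto)
  have "\<bar>integral\<^sup>L \<mu> g\<bar> \<le> (\<integral>x. \<bar>g x\<bar> \<partial>\<mu>)" by (rule integral_abs_bound)
  also have "\<dots> \<le> (\<integral>x. c \<partial>\<mu>)" by (rule integral_mono) (use int gb in auto)
  also have "\<dots> = c" by (simp add: prob_space)
  finally show ?thesis .
qed

lemma indic_bound:
  fixes F :: "'b \<Rightarrow> real"
  assumes fm: "finite_measure M" and Fm: "F \<in> borel_measurable M" and P: "P \<in> sets M"
    and Fd: "\<And>m. m \<in> P \<Longrightarrow> \<bar>F m\<bar> \<le> d" and FB: "\<And>m. m \<in> space M \<Longrightarrow> \<bar>F m\<bar> \<le> B"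
  shows "\<bar>\<integral>m. F m * indicator P m \<partial>M\<bar> \<le> d * measure M P"
proof -
  interpret finite_measure M by (rule fm)
  have int: "integrable M (\<lambda>m. F m * indicator P m)"
  proof (rule integrable_const_bound[where B="max B 0"])
    show "AE m in M. norm (F m * indicator P m) \<le> max B 0"
      proof (rule AE_I2)
      fix m assume "m \<in> space M"
      then have "\<bar>F m\<bar> \<le> B" by (rule FB)
      then show "norm (F m * indicator P m) \<le> max B 0" using abs_ge_zero[of "F m"] by (auto simp: indicator_def)
    qed
  qed (use Fm P in auto)
  have intd: "integrable M (\<lambda>m. d * indicator P m)" using P by (simp add: integrable_real_indicator emeasure_finite less_top[symmetric])
  have "\<bar>\<integral>m. F m * indicator P m \<partial>M\<bar> \<le> (\<integral>m. \<bar>F m * indicator P m\<bar> \<partial>M)" by (rule integral_abs_bound)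
  also have "\<dots> \<le> (\<integral>m. d * indicator P m \<partial>M)"
    by (rule integral_mono) (use int intd Fd in \<open>auto simp: indicator_def\<close>)
  also have "\<dots> = d * measure M P" using P by simp
  finally show ?thesis .
qed

lemma floor_close:
  fixes x y :: real
  assumes "\<lfloor>x\<rfloor> = \<lfloor>y\<rfloor>" shows "\<bar>x - y\<bar> < 1"
  using assms by linarith




theorem lemma4p4:
  fixes f :: "'a::metric_space \<Rightarrow> 'a"
    and phi :: "nat \<Rightarrow> 'a \<Rightarrow> real"
    and \<delta> \<epsilon> :: real
    and \<nu> :: "'a measure" and \<tau> :: "'a measure measure"
  assumes "compact (UNIV :: 'a set)"
    and "continuous_on UNIV f"
    and "\<And>i. continuous_on UNIV (phi i)"
    and "\<And>g e. continuous_on UNIV g \<Longrightarrow> e > 0 \<Longrightarrow>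
           \<exists>i\<ge>1. \<forall>x. \<bar>g x - phi i x\<bar> < e"
    and "0 < \<delta>" "\<delta> < 1" "0 < \<epsilon>"
    and "invariant_meas f \<nu>"
    and "ergodic_decomposition f \<nu> \<tau>"
  shows "\<forall>k::nat\<ge>1. \<exists>s::nat. \<exists>m :: nat \<Rightarrow> 'a measure. \<exists>a :: nat \<Rightarrow> real.
           (\<forall>j<s. ergodic_meas f (m j) \<and> a j \<in> \<rat> \<and> a j > 0) \<and>
           (\<Sum>j<s. a j) = 1 \<and>
           (\<exists>\<nu>k. borel_prob \<nu>k \<and>
              (\<forall>A\<in>sets borel. emeasure \<nu>k A = (\<Sum>j<s. ennreal (a j) * emeasure (m j) A)) \<and>
              Dmet phi \<nu> \<nu>k \<le> 1 / real k) \<and>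
           katok_inv f \<delta> \<epsilon> \<tau> \<le> (\<Sum>j<s. ennreal (a j) * e2ennreal (katok_erg f \<delta> \<epsilon> (m j)))"
proof (intro allI impI)
  note cpt = assms(1) and phic = assms(3) and d0 = assms(5) and e0 = assms(7)
    and nu = assms(8) and dec = assms(9)
  fix k :: nat assume k: "k \<ge> 1"
  have tau: "prob_space \<tau>" "sets \<tau> = sets (prob_algebra borel)" "AE m in \<tau>. ergodic_meas f m"
    using dec unfolding ergodic_decomposition_def by auto
  interpret T: prob_space \<tau> by (rule tau(1))
  have spt: "space \<tau> = {N. sets N = sets borel \<and> prob_space N}"
    using sets_eq_imp_space_eq[OF tau(2)] by (simp add: space_prob_algebra)
  have nus: "prob_space \<nu>" "sets \<nu> = sets borel" using nu unfolding invariant_meas_def borel_prob_def by auto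

  define c where "c i = sup_norm (phi (Suc i))" for i
  define G where "G i m = integral\<^sup>L m (phi (Suc i))" for i m
  have phim: "phi (Suc i) \<in> borel_measurable borel" for i
    using cont_facts[OF cpt phic[of "Suc i"]] by auto
  have phib: "\<bar>phi (Suc i) x\<bar> \<le> c i" for i x
    using cont_facts[OF cpt phic[of "Suc i"]] by (auto simp: c_def)
  have c0: "c i \<ge> 0" for i
    using cont_facts[OF cpt phic[of "Suc i"]] by (auto simp: c_def)
  have Gm[measurable]: "G i \<in> borel_measurable \<tau>" for i
    unfolding G_def by (rule decomp_integral(1)[OF dec nu phim phib])
  have Gint: "integral\<^sup>L \<nu> (phi (Suc i)) = (\<integral>m. G i m \<partial>\<tau>)" for i
    unfolding G_def by (rule decomp_integral(2)[OF dec nu phim phib])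
  have Gb: "\<bar>G i m\<bar> \<le> c i" if "m \<in> space \<tau>" for m i
    unfolding G_def by (rule bounded_int[OF _ _ phim phib]) (use that spt in auto)
  have Gi: "integrable \<tau> (G i)" for i
    by (rule T.integrable_const_bound[where B="c i"]) (use Gb in auto)

  define K :: real where "K = 2 * real k"
  have Kp: "K > 0" unfolding K_def using k by simp
  define N where "N = 2 * k"
  define y where "y i m = K * G i m / c i" for i m
  have yb: "\<bar>y i m\<bar> \<le> K" if "m \<in> space \<tau>" for i m
  proof (cases "c i = 0")
    case True then show ?thesis using Kp by (simp add: y_def)
  next
    case False
    then have cp: "c i > 0" using c0[of i] by simp
    have "\<bar>y i m\<bar> = K * (\<bar>G i m\<bar> / c i)" using Kp cp by (simp add: y_def abs_mult)
    also have "\<dots> \<le> K * 1" using Gb[OF that, of i] cp Kp by (intro mult_left_mono) auto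
    finally show ?thesis by simp
  qed
  define key where "key m = (\<lambda>i. if i < N then \<lfloor>y i m\<rfloor> else undefined)" for m
  define V where "V = key ` space \<tau>"
  have keyb: "key m \<in> PiE {..<N} (\<lambda>_. {-(2*int k)..2*int k})" if "m \<in> space \<tau>" for m
  proof -
    have "\<lfloor>y i m\<rfloor> \<in> {-(2*int k)..2*int k}" for i
    proof -
      have "-K \<le> y i m" "y i m \<le> K" using yb[OF that, of i] by auto
      then show ?thesis unfolding K_def by (auto simp: le_floor_iff floor_le_iff)
    qed
    moreover have "key m \<in> extensional {..<N}" by (auto simp: extensional_def key_def)
    ultimately show ?thesis by (auto simp: PiE_iff key_def)
  qed
  have finV: "finite V"
    by (rule finite_subset[of _ "PiE {..<N} (\<lambda>_. {-(2*int k)..2*int k})"]) (use keyb in \<open>auto simp: V_def intro!: finite_PiE\<close>)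
  define P where "P v = {m \<in> space \<tau>. \<forall>i<N. real_of_int (v i) \<le> y i m \<and> y i m < real_of_int (v i) + 1}" for v
  have Psets[measurable]: "P v \<in> sets \<tau>" for v unfolding P_def y_def by measurable
  have Psub: "P v \<subseteq> space \<tau>" for v unfolding P_def by auto
  have inP: "m \<in> P (key m)" if "m \<in> space \<tau>" for m
  proof -
    have "real_of_int (key m i) \<le> y i m \<and> y i m < real_of_int (key m i) + 1" if "i < N" for i
      using that of_int_floor_le[of "y i m"] real_of_int_floor_add_one_gt[of "y i m"] by (simp add: key_def)
    then show ?thesis using \<open>m \<in> space \<tau>\<close> unfolding P_def by blast
  qed
  have Pkey: "v = key m" if vV: "v \<in> V" and mP: "m \<in> P v" for v m
  proof
    fix i
    obtain m' where m': "v = key m'" using vV unfolding V_def by auto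
    show "v i = key m i"
    proof (cases "i < N")
      case True
      then have "real_of_int (v i) \<le> y i m" "y i m < real_of_int (v i) + 1" using mP unfolding P_def by auto
      then have "\<lfloor>y i m\<rfloor> = v i" by (rule floor_unique)
      then show ?thesis using True by (simp add: key_def)
    next
      case False
      then show ?thesis using m' by (simp add: key_def)
    qed
  qed
  have keyV: "key m \<in> V" if "m \<in> space \<tau>" for m using that unfolding V_def by auto
  have Piff: "m \<in> P v \<longleftrightarrow> v = key m" if "m \<in> space \<tau>" "v \<in> V" for m v
    using inP[OF that(1)] Pkey[OF that(2)] by blast
  have indPr: "indicator (P v) m = (if v = key m then 1 else 0 :: real)"
    if "m \<in> space \<tau>" "v \<in> V" for m v
    unfolding indicator_def using Piff[OF that] by simp
  have indPe: "indicator (P v) m = (if v = key m then 1 else 0 :: ennreal)"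
    if "m \<in> space \<tau>" "v \<in> V" for m v
    unfolding indicator_def using Piff[OF that] by simp

  have keyi: "key m i = \<lfloor>y i m\<rfloor>" if "i < N" for m i using that by (simp add: key_def)
  have close: "\<bar>G i m - G i m'\<bar> \<le> c i / K" if "i < N" "m \<in> P v" "m' \<in> P v" for i m m' v
  proof (cases "c i = 0")
    case True
    have "m \<in> space \<tau>" "m' \<in> space \<tau>" using that Psub by auto
    then show ?thesis using Gb[of m i] Gb[of m' i] True by simp
  next
    case False
    then have cp: "c i > 0" using c0[of i] by simp
    have A: "real_of_int (v i) \<le> y i m" "y i m < real_of_int (v i) + 1" using that(1,2) unfolding P_def by auto
    have B: "real_of_int (v i) \<le> y i m'" "y i m' < real_of_int (v i) + 1" using that(1,3) unfolding P_def by auto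
    have "\<bar>y i m - y i m'\<bar> < 1" using A B by (auto simp: abs_less_iff)
    moreover have "y i m - y i m' = K * (G i m - G i m') / c i"
      unfolding y_def by (simp add: diff_divide_distrib right_diff_distrib)
    moreover have "\<bar>K * (G i m - G i m') / c i\<bar> = K * \<bar>G i m - G i m'\<bar> / c i"
      using cp Kp by (simp add: abs_mult)
    ultimately have "K * \<bar>G i m - G i m'\<bar> / c i < 1" by simp
    then have "K * \<bar>G i m - G i m'\<bar> < c i" using cp by (simp add: divide_less_eq)
    then show ?thesis using Kp by (simp add: le_divide_eq mult.commute less_imp_le)
  qed

  define b where "b v = measure \<tau> (P v)" for v
  have b0: "b v \<ge> 0" for v by (simp add: b_def)
  have bsum: "(\<Sum>v\<in>V. b v) = 1"
  proof -
    have "measure \<tau> (\<Union>v\<in>V. P v) = (\<Sum>v\<in>V. b v)" unfolding b_def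
    proof (rule T.finite_measure_finite_Union[OF finV])
      show "(\<lambda>v. P v) ` V \<subseteq> sets \<tau>" using Psets by auto
      show "disjoint_family_on P V"
        unfolding disjoint_family_on_def using Pkey by blast
    qed
    moreover have "(\<Union>v\<in>V. P v) = space \<tau>" using Psub inP keyV by blast
    ultimately show ?thesis by (simp add: T.prob_space)
  qed
  have emb: "emeasure \<tau> (P v) = ennreal (b v)" for v unfolding b_def by (simp add: T.emeasure_eq_measure)

  define h where "h m = e2ennreal (katok_erg f \<delta> \<epsilon> m)" for m
  obtain L where L0: "L \<ge> 0" and hL': "\<forall>m. prob_space m \<and> sets m = sets borel \<longrightarrow> h m \<le> ennreal L"
    using katok_bound[OF cpt e0 d0, of f] unfolding h_def by blast
  have hL: "h m \<le> ennreal L" if "m \<in> space \<tau>" for m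
    using hL' that unfolding spt by simp
  obtain u where um[measurable]: "u \<in> borel_measurable \<tau>" and uh: "\<And>m. u m \<le> h m"
    and Hu: "katok_inv f \<delta> \<epsilon> \<tau> \<le> integral\<^sup>N \<tau> u"
    using measurable_minorant[of \<tau> h] unfolding katok_inv_def h_def by blast
  define I where "I v = (\<integral>\<^sup>+ m. u m * indicator (P v) m \<partial>\<tau>)" for v
  have Isum: "integral\<^sup>N \<tau> u = (\<Sum>v\<in>V. I v)"
  proof -
    have "integral\<^sup>N \<tau> u = (\<integral>\<^sup>+ m. (\<Sum>v\<in>V. u m * indicator (P v) m) \<partial>\<tau>)"
    proof (rule nn_integral_cong)
      fix m assume m: "m \<in> space \<tau>"
      have "(\<Sum>v\<in>V. u m * indicator (P v) m) = (\<Sum>v\<in>V. if v = key m then u m else 0)"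
        by (rule sum.cong) (use indPe[OF m] in auto)
      also have "\<dots> = u m" using finV keyV[OF m] by simp
      finally show "u m = (\<Sum>v\<in>V. u m * indicator (P v) m)" by simp
    qed
    also have "\<dots> = (\<Sum>v\<in>V. I v)" unfolding I_def by (rule nn_integral_sum) auto
    finally show ?thesis .
  qed
  have Ile: "I v \<le> ennreal L * ennreal (b v)" for v
  proof -
    have "I v \<le> (\<integral>\<^sup>+ m. ennreal L * indicator (P v) m \<partial>\<tau>)" unfolding I_def
    proof (rule nn_integral_mono)
      fix m assume "m \<in> space \<tau>"
      then have "u m \<le> ennreal L" using uh[of m] hL[of m] by (meson order_trans)
      then show "u m * indicator (P v) m \<le> ennreal L * indicator (P v) m"
        by (simp add: indicator_def)
    qed
    also have "\<dots> = ennreal L * emeasure \<tau> (P v)" by (rule nn_integral_cmult_indicator) simp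
    finally show ?thesis by (simp add: emb)
  qed

  define Vp where "Vp = {v \<in> V. b v > 0}"
  have finVp: "finite Vp" using finV by (simp add: Vp_def)
  have VpV: "Vp \<subseteq> V" by (auto simp: Vp_def)
  have bz: "b v = 0" if "v \<in> V - Vp" for v using that b0[of v] by (auto simp: Vp_def)
  have bVp: "(\<Sum>v\<in>Vp. b v) = 1"
  proof -
    have "(\<Sum>v\<in>Vp. b v) = (\<Sum>v\<in>V. b v)"
      by (rule sum.mono_neutral_left[OF finV VpV]) (use bz in auto)
    then show ?thesis using bsum by simp
  qed
  have Vpne: "Vp \<noteq> {}" using bVp by auto
  have bpos: "\<forall>v\<in>Vp. b v > 0" by (simp add: Vp_def)

  have exm: "\<exists>m\<in>P v. ergodic_meas f m \<and> I v \<le> ennreal (b v) * h m" if v: "v \<in> Vp" for v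
  proof (rule ccontr)
    assume neg: "\<not> (\<exists>m\<in>P v. ergodic_meas f m \<and> I v \<le> ennreal (b v) * h m)"
    then have lt: "ennreal (b v) * h m < I v" if "m \<in> P v" "ergodic_meas f m" for m
      using that by (auto simp: not_le)
    have bp: "b v > 0" using v by (simp add: Vp_def)
    have Ifin: "I v \<noteq> \<infinity>"
    proof -
      have "I v \<le> ennreal (L * b v)" using Ile[of v] L0 b0[of v] by (simp add: ennreal_mult)
      then show ?thesis by (auto simp: top_unique)
    qed
    define r where "r = enn2real (I v)"
    have Ir: "I v = ennreal r" "r \<ge> 0" using Ifin by (auto simp: r_def less_top)
    define cc where "cc = r / b v"
    have cc0: "cc \<ge> 0" using Ir bp by (simp add: cc_def)
    have ccb: "ennreal (b v) * ennreal cc = I v"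
      using Ir bp cc0 by (simp add: cc_def ennreal_mult[symmetric])
    have hlt: "u m < ennreal cc" if "m \<in> P v" "ergodic_meas f m" for m
    proof -
      have "h m < ennreal cc"
      proof (rule ccontr)
        assume "\<not> h m < ennreal cc"
        then have "ennreal cc \<le> h m" by (simp add: not_less)
        then have "ennreal (b v) * ennreal cc \<le> ennreal (b v) * h m" by (rule mult_left_mono) simp
        then show False using lt[OF that] ccb by simp
      qed
      then show ?thesis using uh[of m] by (rule_tac le_less_trans) auto
    qed
    have AE1: "AE m in \<tau>. u m * indicator (P v) m \<le> ennreal cc * indicator (P v) m"
      using tau(3) by eventually_elim (auto simp: indicator_def hlt less_imp_le)
    have notAE: "\<not> (AE m in \<tau>. ennreal cc * indicator (P v) m \<le> u m * indicator (P v) m)"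
    proof
      assume A: "AE m in \<tau>. ennreal cc * indicator (P v) m \<le> u m * indicator (P v) m"
      have "AE m in \<tau>. m \<notin> P v"
        using A tau(3)
      proof eventually_elim
        case (elim m)
        show "m \<notin> P v"
        proof
          assume mP: "m \<in> P v"
          then have "ennreal cc \<le> u m" using elim(1) by (simp add: indicator_def)
          then show False using hlt[OF mP elim(2)] by simp
        qed
      qed
      then have "emeasure \<tau> (P v) = 0"
        using AE_iff_measurable[OF Psets[of v], of "\<lambda>m. m \<notin> P v"] Psub[of v] by auto
      then show False using bp emb[of v] by simp
    qed
    have "I v < (\<integral>\<^sup>+ m. ennreal cc * indicator (P v) m \<partial>\<tau>)" unfolding I_def
      by (rule nn_integral_less) (use Ifin[unfolded I_def] AE1 notAE in auto)
    also have "\<dots> = ennreal cc * emeasure \<tau> (P v)" by (rule nn_integral_cmult_indicator) simp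
    also have "\<dots> = I v" using ccb emb[of v] by (simp add: mult.commute)
    finally show False by simp
  qed
  then obtain mv where mv: "\<And>v. v \<in> Vp \<Longrightarrow> mv v \<in> P v \<and> ergodic_meas f (mv v) \<and> I v \<le> ennreal (b v) * h (mv v)"
    by metis
  have mvsp: "mv v \<in> space \<tau>" if "v \<in> Vp" for v using mv[OF that] Psub by blast
  define hv where "hv v = enn2real (h (mv v))" for v
  have hv: "h (mv v) = ennreal (hv v)" "hv v \<ge> 0" if "v \<in> Vp" for v
  proof -
    have "h (mv v) \<le> ennreal L" using hL[OF mvsp[OF that]] .
    then have "h (mv v) \<noteq> \<infinity>" by (auto simp: top_unique)
    then show "h (mv v) = ennreal (hv v)" "hv v \<ge> 0" by (auto simp: hv_def less_top)
  qed
  obtain a where a: "\<forall>v\<in>Vp. a v \<in> \<rat> \<and> a v > 0" "sum a Vp = 1" "(\<Sum>v\<in>Vp. \<bar>a v - b v\<bar>) \<le> 1 / K"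
    "(\<Sum>v\<in>Vp. b v * hv v) \<le> (\<Sum>v\<in>Vp. a v * hv v)"
    using rat_approx[OF finVp Vpne bpos bVp, of "1/K" hv] Kp by auto

  have entropy: "katok_inv f \<delta> \<epsilon> \<tau> \<le> (\<Sum>v\<in>Vp. ennreal (a v) * h (mv v))"
  proof -
    have "katok_inv f \<delta> \<epsilon> \<tau> \<le> (\<Sum>v\<in>V. I v)" using Hu Isum by simp
    also have "(\<Sum>v\<in>V. I v) = (\<Sum>v\<in>Vp. I v)"
    proof (rule sum.mono_neutral_right[OF finV VpV])
      show "\<forall>v\<in>V - Vp. I v = 0" using Ile bz by (metis ennreal_0 le_zero_eq mult_zero_right)
    qed
    also have "\<dots> \<le> (\<Sum>v\<in>Vp. ennreal (b v) * h (mv v))" by (rule sum_mono) (use mv in auto)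
    also have "\<dots> = (\<Sum>v\<in>Vp. ennreal (b v * hv v))"
      by (rule sum.cong) (use hv b0 in \<open>auto simp: ennreal_mult\<close>)
    also have "\<dots> = ennreal (\<Sum>v\<in>Vp. b v * hv v)" using hv b0 by (simp add: sum_ennreal)
    also have "\<dots> \<le> ennreal (\<Sum>v\<in>Vp. a v * hv v)" using a(4) by (rule ennreal_leI)
    also have "\<dots> = (\<Sum>v\<in>Vp. ennreal (a v * hv v))" using hv a(1) by (simp add: sum_ennreal less_imp_le)
    also have "\<dots> = (\<Sum>v\<in>Vp. ennreal (a v) * h (mv v))"
      by (rule sum.cong) (use hv a(1) in \<open>auto simp: ennreal_mult less_imp_le\<close>)
    finally show ?thesis .
  qed

  define s where "s = card Vp"
  obtain e where e: "bij_betw e {0..<s} Vp" using ex_bij_betw_nat_finite[OF finVp] unfolding s_def by blast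
  have s0: "s > 0" using finVp Vpne by (simp add: s_def card_gt_0_iff)
  have eVp: "e j \<in> Vp" if "j < s" for j using bij_betwE[OF e] that by auto
  define M where "M j = mv (e (if j < s then j else 0))" for j
  define wA where "wA j = a (e j)" for j
  have Mj: "M j = mv (e j)" if "j < s" for j using that by (simp add: M_def)
  have Msp: "M j \<in> space (prob_algebra borel)" for j
  proof -
    have "e (if j < s then j else 0) \<in> Vp" using eVp s0 by auto
    then have "M j \<in> space \<tau>" unfolding M_def by (rule mvsp)
    then show ?thesis using spt by (simp add: space_prob_algebra)
  qed
  have reR: "(\<Sum>j<s. F (e j)) = (\<Sum>v\<in>Vp. F v)" for F :: "_ \<Rightarrow> real"
    unfolding lessThan_atLeast0 by (rule sum.reindex_bij_betw[OF e])
  have reE: "(\<Sum>j<s. F (e j)) = (\<Sum>v\<in>Vp. F v)" for F :: "_ \<Rightarrow> ennreal"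
    unfolding lessThan_atLeast0 by (rule sum.reindex_bij_betw[OF e])
  have Asum: "(\<Sum>j<s. wA j) = 1" unfolding wA_def reR using a(2) .
  have A0: "wA j \<ge> 0" if "j < s" for j using a(1) eVp[OF that] by (auto simp: wA_def less_imp_le)
  obtain \<nu>k where nk: "borel_prob \<nu>k"
    "\<forall>A\<in>sets borel. emeasure \<nu>k A = (\<Sum>j<s. ennreal (wA j) * emeasure (M j) A)"
    "\<forall>g B. g \<in> borel_measurable borel \<longrightarrow> (\<forall>x. \<bar>g x\<bar> \<le> B) \<longrightarrow> integral\<^sup>L \<nu>k g = (\<Sum>j<s. wA j * integral\<^sup>L (M j) g)"
    using mix_measure[where m=M and a=wA and s=s, OF Msp A0 Asum] by blast
  have nks: "prob_space \<nu>k" "sets \<nu>k = sets borel" using nk(1) unfolding borel_prob_def by auto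

  define D where "D i = integral\<^sup>L \<nu> (phi (Suc i)) - integral\<^sup>L \<nu>k (phi (Suc i))" for i
  have Dall: "\<bar>D i\<bar> \<le> 2 * c i" for i
  proof -
    have "\<bar>integral\<^sup>L \<nu> (phi (Suc i))\<bar> \<le> c i" by (rule bounded_int[OF nus phim phib])
    moreover have "\<bar>integral\<^sup>L \<nu>k (phi (Suc i))\<bar> \<le> c i" by (rule bounded_int[OF nks phim phib])
    ultimately show ?thesis unfolding D_def by linarith
  qed
  have Dnear: "\<bar>D i\<bar> \<le> c i / k" if iN: "i < N" for i
  proof -
    have intk: "integral\<^sup>L \<nu>k (phi (Suc i)) = (\<Sum>v\<in>Vp. a v * G i (mv v))"
    proof -
      have "integral\<^sup>L \<nu>k (phi (Suc i)) = (\<Sum>j<s. wA j * G i (M j))"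
        using nk(3) phim[of i] phib[of i] unfolding G_def by blast
      also have "\<dots> = (\<Sum>j<s. a (e j) * G i (mv (e j)))" by (rule sum.cong) (auto simp: wA_def Mj)
      also have "\<dots> = (\<Sum>v\<in>Vp. a v * G i (mv v))" by (rule reR)
      finally show ?thesis .
    qed
    have GPi: "integrable \<tau> (\<lambda>m. G i m * indicator (P v) m)" for v
      by (rule T.integrable_const_bound[where B="c i"]) (use Gb c0 in \<open>auto simp: indicator_def\<close>)
    have intnu: "integral\<^sup>L \<nu> (phi (Suc i)) = (\<Sum>v\<in>V. \<integral>m. G i m * indicator (P v) m \<partial>\<tau>)"
    proof -
      have "integral\<^sup>L \<nu> (phi (Suc i)) = (\<integral>m. (\<Sum>v\<in>V. G i m * indicator (P v) m) \<partial>\<tau>)"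
        unfolding Gint
      proof (rule Bochner_Integration.integral_cong[OF refl])
        fix m assume m: "m \<in> space \<tau>"
        have "(\<Sum>v\<in>V. G i m * indicator (P v) m) = (\<Sum>v\<in>V. if v = key m then G i m else 0)"
          by (rule sum.cong) (use indPr[OF m] in auto)
        also have "\<dots> = G i m" using finV keyV[OF m] by simp
        finally show "G i m = (\<Sum>v\<in>V. G i m * indicator (P v) m)" by simp
      qed
      also have "\<dots> = (\<Sum>v\<in>V. \<integral>m. G i m * indicator (P v) m \<partial>\<tau>)"
        by (rule Bochner_Integration.integral_sum) (use GPi in auto)
      finally show ?thesis .
    qed
    have zero: "(\<integral>m. G i m * indicator (P v) m \<partial>\<tau>) = 0" if "v \<in> V - Vp" for v
    proof -
      have "\<bar>\<integral>m. G i m * indicator (P v) m \<partial>\<tau>\<bar> \<le> c i * measure \<tau> (P v)"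
        by (rule indic_bound[OF T.finite_measure_axioms Gm Psets]) (use Gb Psub in blast)+
      then show ?thesis using bz[OF that] by (simp add: b_def)
    qed
    define E where "E v = (\<integral>m. (G i m - G i (mv v)) * indicator (P v) m \<partial>\<tau>)" for v
    have Edec: "(\<integral>m. G i m * indicator (P v) m \<partial>\<tau>) = E v + b v * G i (mv v)" for v
    proof -
      have "E v = (\<integral>m. G i m * indicator (P v) m - G i (mv v) * indicator (P v) m \<partial>\<tau>)"
        unfolding E_def by (simp add: left_diff_distrib)
      also have "\<dots> = (\<integral>m. G i m * indicator (P v) m \<partial>\<tau>) - (\<integral>m. G i (mv v) * indicator (P v) m \<partial>\<tau>)"
        by (rule Bochner_Integration.integral_diff[OF GPi]) (simp add: T.emeasure_eq_measure)
      also have "(\<integral>m. G i (mv v) * indicator (P v) m \<partial>\<tau>) = G i (mv v) * b v" by (simp add: b_def)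
      finally show ?thesis by simp
    qed
    have Ebound: "\<bar>E v\<bar> \<le> (c i / K) * b v" if v: "v \<in> Vp" for v
      unfolding E_def b_def
    proof (rule indic_bound[OF T.finite_measure_axioms _ Psets])
      show "(\<lambda>m. G i m - G i (mv v)) \<in> borel_measurable \<tau>" by measurable
      show "\<bar>G i m - G i (mv v)\<bar> \<le> c i / K" if "m \<in> P v" for m
        by (rule close[OF iN that]) (use mv[OF v] in blast)
      show "\<bar>G i m - G i (mv v)\<bar> \<le> 2 * c i" if "m \<in> space \<tau>" for m
        using Gb[OF that, of i] Gb[OF mvsp[OF v], of i] by linarith
    qed
    have "D i = (\<Sum>v\<in>Vp. \<integral>m. G i m * indicator (P v) m \<partial>\<tau>) - (\<Sum>v\<in>Vp. a v * G i (mv v))"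
    proof -
      have "(\<Sum>v\<in>V. \<integral>m. G i m * indicator (P v) m \<partial>\<tau>) = (\<Sum>v\<in>Vp. \<integral>m. G i m * indicator (P v) m \<partial>\<tau>)"
        by (rule sum.mono_neutral_right[OF finV VpV]) (use zero in blast)
      then show ?thesis unfolding D_def intk intnu by simp
    qed
    also have "\<dots> = (\<Sum>v\<in>Vp. E v) + (\<Sum>v\<in>Vp. (b v - a v) * G i (mv v))"
      unfolding Edec by (simp add: sum.distrib left_diff_distrib sum_subtractf)
    finally have Deq: "D i = (\<Sum>v\<in>Vp. E v) + (\<Sum>v\<in>Vp. (b v - a v) * G i (mv v))" .
    have t1: "\<bar>\<Sum>v\<in>Vp. E v\<bar> \<le> c i / K"
    proof -
      have "\<bar>\<Sum>v\<in>Vp. E v\<bar> \<le> (\<Sum>v\<in>Vp. \<bar>E v\<bar>)" by (rule sum_abs)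
      also have "\<dots> \<le> (\<Sum>v\<in>Vp. (c i / K) * b v)" by (rule sum_mono) (rule Ebound)
      also have "\<dots> = (c i / K) * (\<Sum>v\<in>Vp. b v)" by (rule sum_distrib_left[symmetric])
      also have "\<dots> = c i / K" using bVp by simp
      finally show ?thesis .
    qed
    have t2: "\<bar>\<Sum>v\<in>Vp. (b v - a v) * G i (mv v)\<bar> \<le> c i / K"
    proof -
      have "\<bar>\<Sum>v\<in>Vp. (b v - a v) * G i (mv v)\<bar> \<le> (\<Sum>v\<in>Vp. \<bar>(b v - a v) * G i (mv v)\<bar>)" by (rule sum_abs)
      also have "\<dots> \<le> (\<Sum>v\<in>Vp. \<bar>a v - b v\<bar> * c i)"
      proof (rule sum_mono)
        fix v assume v: "v \<in> Vp"
        have "\<bar>(b v - a v) * G i (mv v)\<bar> = \<bar>a v - b v\<bar> * \<bar>G i (mv v)\<bar>" by (simp add: abs_mult abs_minus_commute)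
        also have "\<dots> \<le> \<bar>a v - b v\<bar> * c i" using Gb[OF mvsp[OF v], of i] by (intro mult_left_mono) auto
        finally show "\<bar>(b v - a v) * G i (mv v)\<bar> \<le> \<bar>a v - b v\<bar> * c i" .
      qed
      also have "\<dots> = (\<Sum>v\<in>Vp. \<bar>a v - b v\<bar>) * c i" by (simp add: sum_distrib_right)
      also have "\<dots> \<le> (1 / K) * c i" using a(3) c0[of i] by (intro mult_right_mono) auto
      finally show ?thesis by simp
    qed
    have "\<bar>D i\<bar> \<le> c i / K + c i / K" unfolding Deq using t1 t2 by linarith
    also have "\<dots> = c i / k" unfolding K_def using k by (simp add: field_simps)
    finally show ?thesis .
  qed
  have Dk: "Dmet phi \<nu> \<nu>k \<le> 1 / real k"
  proof -
    have N2: "2 * k \<le> 2 ^ N" unfolding N_def using less_exp[of "2 * k"] by simp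
    have "(\<Sum>i. \<bar>D i\<bar> / (2 ^ (Suc i + 1) * c i)) \<le> 1 / k"
      by (rule Dsum_bound[OF c0 Dall Dnear k N2])
    then show ?thesis unfolding Dmet_def D_def c_def by simp
  qed
  have ent2: "katok_inv f \<delta> \<epsilon> \<tau> \<le> (\<Sum>j<s. ennreal (wA j) * e2ennreal (katok_erg f \<delta> \<epsilon> (M j)))"
  proof -
    have "(\<Sum>j<s. ennreal (wA j) * e2ennreal (katok_erg f \<delta> \<epsilon> (M j))) = (\<Sum>j<s. ennreal (a (e j)) * h (mv (e j)))"
      by (rule sum.cong) (auto simp: wA_def Mj h_def)
    also have "\<dots> = (\<Sum>v\<in>Vp. ennreal (a v) * h (mv v))" by (rule reE)
    finally show ?thesis using entropy by simp
  qed
  show "\<exists>s::nat. \<exists>m :: nat \<Rightarrow> 'a measure. \<exists>a :: nat \<Rightarrow> real.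
           (\<forall>j<s. ergodic_meas f (m j) \<and> a j \<in> \<rat> \<and> a j > 0) \<and>
           (\<Sum>j<s. a j) = 1 \<and>
           (\<exists>\<nu>k. borel_prob \<nu>k \<and>
              (\<forall>A\<in>sets borel. emeasure \<nu>k A = (\<Sum>j<s. ennreal (a j) * emeasure (m j) A)) \<and>
              Dmet phi \<nu> \<nu>k \<le> 1 / real k) \<and>
           katok_inv f \<delta> \<epsilon> \<tau> \<le> (\<Sum>j<s. ennreal (a j) * e2ennreal (katok_erg f \<delta> \<epsilon> (m j)))"
  proof (intro exI conjI allI impI)
    fix j assume j: "j < s"
    show "ergodic_meas f (M j)" using mv[OF eVp[OF j]] Mj[OF j] by simp
    show "wA j \<in> \<rat>" "wA j > 0" using a(1) eVp[OF j] by (auto simp: wA_def)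
  next
    show "(\<Sum>j<s. wA j) = 1" by (rule Asum)
  next
    show "borel_prob \<nu>k" by (rule nk(1))
    show "\<forall>A\<in>sets borel. emeasure \<nu>k A = (\<Sum>j<s. ennreal (wA j) * emeasure (M j) A)" by (rule nk(2))
    show "Dmet phi \<nu> \<nu>k \<le> 1 / real k" by (rule Dk)
  next
    show "katok_inv f \<delta> \<epsilon> \<tau> \<le> (\<Sum>j<s. ennreal (wA j) * e2ennreal (katok_erg f \<delta> \<epsilon> (M j)))" by (rule ent2)
  qed
qed


end
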